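(* Let $\lambda>0$ and $n\ge0$ an integer. Then for all $x\in[-1,1]$, $$\mathcal D^\lambda_+C^\lambda_n(x)=\frac{\sqrt\pi\,\Gamma(\lambda+\frac12)}{\Gamma(\lambda)}\,\frac{2(n+2\lambda)}{n+\lambda}\,C^{\lambda+1/2}_{n-1}(x),\qquad \mathcal D^\lambda_-C^\lambda_n(x)=\frac{\sqrt\pi\,\Gamma(\lambda+\frac12)}{\Gamma(\lambda)}\,\frac{2n}{n+\lambda}\,C^{\lambda+1/2}_n(x),$$ with the convention $C^{\lambda+1/2}_{-1}=0$.
   Context: $C^\mu_n$ are Gegenbauer polynomials with generating function $(1-2xr+r^2)^{-\mu}$. For $f$ absolutely continuous on $[-1,1]$ and $\lambda\ge0$: $D^\lambda_+f(x)=(1+x)\frac{d}{dx}\Big\{(1+x)^{-\lambda}\int_{-1}^x(x-\tau)^{-1/2}(1+\tau)^{\lambda-1/2}f(\tau)\,d\tau\Big\}$, $D^\lambda_-f(x)=(1-x)\frac{d}{dx}\Big\{(1-x)^{-\lambda}\int_x^1(\tau-x)^{-1/2}(1-\tau)^{\lambda-1/2}f(\tau)\,d\tau\Big\}$, $\mathcal D^\lambda_+=D^\lambda_++D^\lambda_-$, $\mathcal D^\lambda_-=D^\lambda_+-D^\lambda_-$. *)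

theory Defs
  imports "HOL-Analysis.Analysis"
begin

definition gegenbauer :: "real \<Rightarrow> nat \<Rightarrow> real \<Rightarrow> real" where
  "gegenbauer \<mu> n x =
     ((deriv ^^ n) (\<lambda>r. (1 - 2 * x * r + r ^ 2) powr (- \<mu>)) 0) / fact n"

definition Dplus :: "real \<Rightarrow> (real \<Rightarrow> real) \<Rightarrow> real \<Rightarrow> real" where
  "Dplus lam f x = (1 + x) *
     vector_derivative
       (\<lambda>y. (1 + y) powr (- lam) *
            integral {-1..y} (\<lambda>\<tau>. (y - \<tau>) powr (-1/2) * (1 + \<tau>) powr (lam - 1/2) * f \<tau>))
       (at x within {-1..1})"

definition Dminus :: "real \<Rightarrow> (real \<Rightarrow> real) \<Rightarrow> real \<Rightarrow> real" where
  "Dminus lam f x = (1 - x) *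
     vector_derivative
       (\<lambda>y. (1 - y) powr (- lam) *
            integral {y..1} (\<lambda>\<tau>. (\<tau> - y) powr (-1/2) * (1 - \<tau>) powr (lam - 1/2) * f \<tau>))
       (at x within {-1..1})"

definition calDplus :: "real \<Rightarrow> (real \<Rightarrow> real) \<Rightarrow> real \<Rightarrow> real" where
  "calDplus lam f x = Dplus lam f x + Dminus lam f x"

definition calDminus :: "real \<Rightarrow> (real \<Rightarrow> real) \<Rightarrow> real \<Rightarrow> real" where
  "calDminus lam f x = Dplus lam f x - Dminus lam f x"

end

theory Submission
  imports Defs "HOL-Computational_Algebra.Formal_Power_Series" "HOL-Analysis.FPS_Convergence"
begin


fun Cf :: "real \<Rightarrow> real \<Rightarrow> nat \<Rightarrow> real" where
  "Cf mu x 0 = 1"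
| "Cf mu x (Suc 0) = 2*mu*x"
| "Cf mu x (Suc (Suc n)) = (2*x*(n+1+mu)*Cf mu x (Suc n) - (n+2*mu)*Cf mu x n)/(n+2)"

lemma fps_poly3: "fps_of_poly [:a,b,c::real:] = fps_const a + fps_const b * fps_X + fps_const c * fps_X^2"
  by (simp add: fps_of_poly_pCons algebra_simps power2_eq_square fps_const_add[symmetric])
lemma fps_poly2: "fps_of_poly [:a,b::real:] = fps_const a + fps_const b * fps_X"
  by (simp add: fps_of_poly_pCons algebra_simps fps_const_add[symmetric])

lemma Cf_rec: "(real n+2)*Cf mu x (Suc (Suc n)) = 2*x*(n+1+mu)*Cf mu x (Suc n) - (n+2*mu)*Cf mu x n"
  by simp

lemma nat_cases2_aux: "(n = 0 \<Longrightarrow> P) \<Longrightarrow> (n = 1 \<Longrightarrow> P) \<Longrightarrow> (\<And>m. n = Suc (Suc m) \<Longrightarrow> P) \<Longrightarrow> P"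
  by (metis One_nat_def not0_implies_Suc)

lemma Cf_ode_fps:
  fixes mu x :: real
  defines "F \<equiv> Abs_fps (Cf mu x)"
  shows "fps_deriv F * fps_of_poly [:1,-2*x,1:] + fps_const mu * (fps_of_poly [:-2*x, 2:] * F) = 0"
proof (rule fps_ext)
  fix n
  have e1: "\<And>G::real fps. fps_nth (G * fps_X) n = (if n = 0 then 0 else fps_nth G (n - 1))"
    using fps_X_power_mult_right_nth[of _ 1] by simp
  have e2: "\<And>G::real fps. fps_nth (G * fps_X^2) n = (if n < 2 then 0 else fps_nth G (n - 2))"
    by (rule fps_X_power_mult_right_nth)
  have e3: "\<And>G::real fps. fps_nth (fps_X * G) n = (if n = 0 then 0 else fps_nth G (n - 1))"
    using fps_X_power_mult_nth[of 1] by simp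
  show "fps_nth (fps_deriv F * fps_of_poly [:1,-2*x,1:] + fps_const mu * (fps_of_poly [:-2*x, 2:] * F)) n = fps_nth 0 n"
    unfolding fps_poly3 fps_poly2 
    apply (simp add: distrib_left distrib_right mult.assoc[symmetric] e1 e2 e3)
    apply (simp add: mult.commute[of _ "fps_const _"] mult.assoc e1 e2 e3 F_def del: Cf.simps)
    apply (cases n rule: nat_cases2_aux)
      apply (simp_all del: Cf.simps)
      apply simp
     apply (simp add: field_simps)
    subgoal for m using Cf_rec[where mu=mu and x=x and n="Suc m"] by (simp add: algebra_simps del: Cf.simps)
    done
qed

lemma Cf_bound:
  fixes mu x :: real
  shows "\<bar>Cf mu x n\<bar> \<le> (2*(2*(\<bar>x\<bar>+1)*(1+2*\<bar>mu\<bar>)))^n"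
proof (induction mu x n rule: Cf.induct)
  case (1 mu x) then show ?case by simp
next
  case (2 mu x)
  have "\<bar>2*mu*x\<bar> \<le> 2*(2*(\<bar>x\<bar>+1)*(1+2*\<bar>mu\<bar>))"
    by (auto simp: abs_mult algebra_simps intro!: mult_mono)
  thus ?case by simp
next
  case (3 mu x n)
  define A where "A = 2*(\<bar>x\<bar>+1)*(1+2*\<bar>mu\<bar>)"
  have A1: "A \<ge> 1" unfolding A_def
    by (smt (verit, ccfv_SIG) abs_ge_zero mult_le_cancel_left1 mult_nonneg_nonneg)
  have IH1: "\<bar>Cf mu x (Suc n)\<bar> \<le> (2*A)^(Suc n)" using 3(1) A_def by simp
  have IH0: "\<bar>Cf mu x n\<bar> \<le> (2*A)^n" using 3(2) A_def by simp
  have n2: "real n + 2 > 0" by simp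
  have c1: "\<bar>2*x*(n+1+mu)\<bar> \<le> A * (n+2)"
  proof -
    have "\<bar>2*x*(n+1+mu)\<bar> = 2*\<bar>x\<bar>*\<bar>n+1+mu\<bar>" by (simp add: abs_mult)
    also have "\<dots> \<le> 2*\<bar>x\<bar>*(n+1+\<bar>mu\<bar>)" by (intro mult_left_mono) auto
    also have "\<dots> \<le> 2*(\<bar>x\<bar>+1)*((1+2*\<bar>mu\<bar>)*(n+2))"
      by (intro mult_mono) (auto simp: algebra_simps)
    finally show ?thesis by (simp add: A_def algebra_simps)
  qed
  have c2: "\<bar>n+2*mu\<bar> \<le> A * (n+2)"
  proof -
    have "\<bar>n+2*mu\<bar> \<le> n + 2*\<bar>mu\<bar>" by auto
    also have "\<dots> \<le> 1*((1+2*\<bar>mu\<bar>)*(n+2))" by (auto simp: algebra_simps)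
    also have "\<dots> \<le> 2*(\<bar>x\<bar>+1)*((1+2*\<bar>mu\<bar>)*(n+2))"
      by (intro mult_right_mono) auto
    finally show ?thesis by (simp add: A_def algebra_simps)
  qed
  have "\<bar>Cf mu x (Suc (Suc n))\<bar> = \<bar>2*x*(n+1+mu)*Cf mu x (Suc n) - (n+2*mu)*Cf mu x n\<bar>/(n+2)"
    by (simp add: abs_divide add_ac)
  also have "\<dots> \<le> (\<bar>2*x*(n+1+mu)\<bar>*\<bar>Cf mu x (Suc n)\<bar> + \<bar>n+2*mu\<bar>*\<bar>Cf mu x n\<bar>)/(n+2)"
    by (intro divide_right_mono) (auto simp: abs_mult[symmetric])
  also have "\<dots> \<le> (A*(n+2)*(2*A)^(Suc n) + A*(n+2)*(2*A)^n)/(n+2)"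
    using A1 by (intro divide_right_mono add_mono mult_mono c1 c2 IH1 IH0) auto
  also have "\<dots> = A*(2*A)^n*(2*A+1)" using n2 by (simp add: field_simps)
  also have "\<dots> \<le> A*(2*A)^n*(4*A)"
    using A1 by (intro mult_left_mono) auto
  also have "\<dots> = (2*A)^(Suc (Suc n))" by (simp add: algebra_simps)
  finally show ?case by (simp add: A_def)
qed

lemma Cf_radius:
  fixes mu x :: real
  defines "A \<equiv> 2*(\<bar>x\<bar>+1)*(1+2*\<bar>mu\<bar>)"
  shows "fps_conv_radius (Abs_fps (Cf mu x)) \<ge> ereal (1/(2*A))"
  unfolding fps_conv_radius_def fps_nth_Abs_fps
proof (rule conv_radius_geI_ex')
  fix r :: real assume r: "0 < r" "ereal r < ereal (1/(2*A))"
  have A1: "A \<ge> 1" unfolding A_def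
    by (smt (verit, ccfv_SIG) abs_ge_zero mult_le_cancel_left1 mult_nonneg_nonneg)
  have lt: "2*A*r < 1" using r A1 by (simp add: field_simps)
  show "summable (\<lambda>n. Cf mu x n * of_real r ^ n)"
  proof (rule summable_comparison_test)
    show "\<exists>N. \<forall>n\<ge>N. norm (Cf mu x n * of_real r ^ n) \<le> (2*A*r)^n"
      using Cf_bound[of mu x] r A1
      by (auto simp: A_def abs_mult power_mult_distrib power_abs intro!: mult_right_mono)
    show "summable (\<lambda>n. (2*A*r)^n)" using lt r A1 by (intro summable_geometric) auto
  qed
qed

lemma fps_nth_conv_deriv_real:
  fixes f :: "real fps"
  assumes "fps_conv_radius f > 0"
  shows   "fps_nth f n = (deriv ^^ n) (eval_fps f) 0 / fact n"
  using assms
proof (induction n arbitrary: f)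
  case 0
  thus ?case by (simp add: eval_fps_def)
next
  case (Suc n f)
  have "(deriv ^^ Suc n) (eval_fps f) 0 = (deriv ^^ n) (deriv (eval_fps f)) 0"
    unfolding funpow_Suc_right o_def ..
  also have "eventually (\<lambda>z::real. z \<in> eball 0 (fps_conv_radius f)) (nhds 0)"
    using Suc.prems by (intro eventually_nhds_in_open) (auto simp: zero_ereal_def)
  hence "eventually (\<lambda>z. deriv (eval_fps f) z = eval_fps (fps_deriv f) z) (nhds 0)"
    by eventually_elim (simp add: eval_fps_deriv)
  hence "(deriv ^^ n) (deriv (eval_fps f)) 0 = (deriv ^^ n) (eval_fps (fps_deriv f)) 0"
    by (intro higher_deriv_cong_ev refl)
  also have "\<dots> / fact n = fps_nth (fps_deriv f) n"
    using Suc.prems fps_conv_radius_deriv[of f] 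
    by (intro Suc.IH [symmetric]) auto
  also have "\<dots> / of_nat (Suc n) = fps_nth f (Suc n)"
    by (simp add: fps_deriv_def del: of_nat_Suc)
  finally show ?case by (simp add: field_split_simps)
qed

lemma gen_eq:
  fixes mu x :: real
  defines "A \<equiv> 2*(\<bar>x\<bar>+1)*(1+2*\<bar>mu\<bar>)"
  defines "F \<equiv> Abs_fps (Cf mu x)"
  assumes r: "\<bar>r\<bar> < 1/(2*A)"
  shows "eval_fps F r = (1 - 2*x*r + r^2) powr (-mu)"
proof -
  define \<rho> where "\<rho> = 1/(2*A)"
  have A1: "A \<ge> 2*(\<bar>x\<bar>+1)" unfolding A_def
    by (smt (verit, ccfv_SIG) abs_ge_zero mult_le_cancel_left1 mult_nonneg_nonneg)
  have rad: "ereal \<rho> \<le> fps_conv_radius F" unfolding F_def \<rho>_def A_def by (rule Cf_radius)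
  have radd: "ereal \<rho> \<le> fps_conv_radius (fps_deriv F)"
    using rad fps_conv_radius_deriv[of F] by (meson order.trans)
  define q where "q = (\<lambda>r::real. 1 - 2*x*r + r^2)"
  have qpos: "q t > 0" if t: "t \<in> ball 0 \<rho>" for t
  proof -
    have t': "\<bar>t\<bar> < 1/(2*A)" using t by (simp add: \<rho>_def)
    have "\<bar>x\<bar> * \<bar>t\<bar> \<le> \<bar>x\<bar> * (1/(2*A))" using t' by (intro mult_left_mono) auto
    also have "\<dots> \<le> \<bar>x\<bar> * (1/(4*(\<bar>x\<bar>+1)))"
      using A1 by (intro mult_left_mono divide_left_mono) (auto intro: mult_pos_pos)
    also have "\<dots> < 1/2" by (simp add: field_simps)
    finally have "\<bar>x * t\<bar> < 1/2" by (simp add: abs_mult)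
    hence "2*x*t < 1" by linarith
    thus ?thesis unfolding q_def by (smt (verit) zero_le_power2)
  qed
  have nr: "norm t < fps_conv_radius F" "norm t < fps_conv_radius (fps_deriv F)" if "t \<in> ball 0 \<rho>" for t
    using that rad radd by (auto intro: less_le_trans[of "ereal (norm t)" "ereal \<rho>"])
  have ode: "eval_fps (fps_deriv F) t * q t + mu * ((-2*x + 2*t) * eval_fps F t) = 0"
    if t: "t \<in> ball 0 \<rho>" for t
  proof -
    have "eval_fps (fps_deriv F * fps_of_poly [:1,-2*x,1:] + fps_const mu * (fps_of_poly [:-2*x, 2:] * F)) t = 0"
      using Cf_ode_fps[of mu x] unfolding F_def by simp
    moreover have "eval_fps (fps_deriv F * fps_of_poly [:1,-2*x,1:] + fps_const mu * (fps_of_poly [:-2*x, 2:] * F)) t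
       = eval_fps (fps_deriv F) t * q t + mu * ((-2*x + 2*t) * eval_fps F t)"
      using nr[OF t]
      apply (subst eval_fps_add)
        apply (rule less_le_trans[OF _ fps_conv_radius_mult], simp)
       apply (rule less_le_trans[OF _ fps_conv_radius_mult], simp)
       apply (rule less_le_trans[OF _ fps_conv_radius_mult], simp)
      apply (subst eval_fps_mult, simp, simp)
      apply (subst eval_fps_mult, simp)
       apply (rule less_le_trans[OF _ fps_conv_radius_mult], simp)
      apply (subst eval_fps_mult, simp, simp)
      apply (simp add: q_def algebra_simps power2_eq_square)
      done
    ultimately show ?thesis by simp
  qed
  define h where "h = (\<lambda>t. eval_fps F t * q t powr mu)"
  have hd: "(h has_field_derivative 0) (at t within ball 0 \<rho>)" if t: "t \<in> ball 0 \<rho>" for t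
  proof -
    have qd: "(q has_real_derivative (-2*x + 2*t)) (at t)"
      unfolding q_def by (auto intro!: derivative_eq_intros)
    have "(h has_field_derivative
        eval_fps (fps_deriv F) t * q t powr mu + eval_fps F t * (mu * q t powr (mu - of_nat 1) * (-2*x + 2*t))) (at t)"
      using DERIV_mult[OF has_field_derivative_eval_fps[OF nr(1)[OF t]] DERIV_fun_powr[OF qd qpos[OF t], of mu]]
      unfolding h_def by (simp add: algebra_simps)
    moreover have "eval_fps (fps_deriv F) t * q t powr mu + eval_fps F t * (mu * q t powr (mu - of_nat 1) * (-2*x + 2*t))
       = q t powr (mu - 1) * (eval_fps (fps_deriv F) t * q t + mu * ((-2*x + 2*t) * eval_fps F t))"
    proof -
      have "q t powr mu = q t powr (mu - 1) * q t" using qpos[OF t]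
        by (simp add: powr_diff field_simps powr_one)
      thus ?thesis by (simp add: algebra_simps)
    qed
    ultimately show ?thesis using ode[OF t] by (simp add: has_field_derivative_at_within)
  qed
  obtain c where c: "\<forall>t\<in>ball 0 \<rho>. h t = c"
    using has_field_derivative_zero_constant[of "ball 0 \<rho>" h] hd by auto
  have \<rho>pos: "\<rho> > 0" unfolding \<rho>_def using A1
    by (smt (verit) abs_ge_zero divide_pos_pos)
  have "h 0 = 1" unfolding h_def q_def by (simp add: eval_fps_at_0 F_def)
  hence c1: "c = 1" using c \<rho>pos by auto
  have rb: "r \<in> ball 0 \<rho>" using r by (simp add: \<rho>_def)
  have "eval_fps F r * q r powr mu = 1" using c c1 rb unfolding h_def by auto
  moreover have "q r powr mu > 0" using qpos[OF rb] by simp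
  ultimately have "eval_fps F r = inverse (q r powr mu)" by (simp add: field_simps)
  thus ?thesis by (simp add: q_def powr_minus)
qed

lemma gegenbauer_Cf: "gegenbauer mu n x = Cf mu x n"
proof -
  define A where "A = 2*(\<bar>x\<bar>+1)*(1+2*\<bar>mu\<bar>)"
  have A1: "A \<ge> 1" unfolding A_def
    by (smt (verit, ccfv_SIG) abs_ge_zero mult_le_cancel_left1 mult_nonneg_nonneg)
  define F where "F = Abs_fps (Cf mu x)"
  have rad: "fps_conv_radius F > 0"
    using Cf_radius[of x mu] A1 unfolding F_def A_def[symmetric]
    by (smt (verit, best) divide_pos_pos ereal_less(2) order_less_le_trans)
  have ev: "eventually (\<lambda>r. (1 - 2*x*r + r^2) powr (-mu) = eval_fps F r) (nhds 0)"
  proof -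
    have "eventually (\<lambda>r::real. r \<in> ball 0 (1/(2*A))) (nhds 0)"
      using A1 by (intro eventually_nhds_in_open) auto
    thus ?thesis by eventually_elim (simp add: gen_eq A_def F_def)
  qed
  have "gegenbauer mu n x = (deriv ^^ n) (eval_fps F) 0 / fact n"
    unfolding gegenbauer_def by (subst higher_deriv_cong_ev[OF ev refl]) simp
  also have "\<dots> = fps_nth F n" using fps_nth_conv_deriv_real[OF rad] by simp
  finally show ?thesis by (simp add: F_def)
qed




definition cc :: "real \<Rightarrow> nat \<Rightarrow> nat \<Rightarrow> real" where
  "cc mu n k = (if k \<le> n then (-1)^k * pochhammer (2*mu) (n+k) /
      (fact (n-k) * fact k * pochhammer (mu+1/2) k) else 0)"

definition ccm :: "real \<Rightarrow> nat \<Rightarrow> nat \<Rightarrow> real" where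
  "ccm mu n k = (if k = 0 then 0 else cc mu n (k-1))"

lemma poch_pos: "mu > 0 \<Longrightarrow> pochhammer (mu + 1/2) k > (0::real)"
  by (intro pochhammer_pos) auto

lemma poch1: "pochhammer (z::real) (m+1) = pochhammer z m * (z + m)"
  by (simp add: pochhammer_Suc)
lemma poch2: "pochhammer (z::real) (m+2) = pochhammer z m * (z + m) * (z + m + 1)"
  by (simp add: pochhammer_Suc numeral_2_eq_2 algebra_simps)
lemma fact1: "(fact (m+1) :: real) = fact m * (real m + 1)"
  by (simp add: algebra_simps)
lemma fact2: "(fact (m+2) :: real) = fact m * (real m + 1) * (real m+2)"
  by (simp add: numeral_2_eq_2 algebra_simps)

lemma case2:
  fixes mu :: real
  assumes mu: "mu > 0" and n: "n = j + 1 + d"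
  shows "(real n+2) * cc mu (n+2) (j+1) = 2*(n+1+mu)*(cc mu (n+1) (j+1) - 2*ccm mu (n+1) (j+1)) - (n+2*mu)*cc mu n (j+1)"
proof -
  define P where "P = pochhammer (2*mu) (2*j+d+2)"
  define Q where "Q = pochhammer (mu+1/2) j"
  define a where "a = 2*mu + (2*j+d+2)"
  define b where "b = mu + 1/2 + j"
  define d1 where "d1 = real d + 1"
  define d2 where "d2 = real d + 2"
  define j1 where "j1 = real j + 1"
  have Q: "Q > 0" unfolding Q_def using poch_pos[OF mu] by simp
  have b: "b > 0" unfolding b_def using mu by simp
  have c1: "cc mu (n+2) (j+1) = (-1)^(j+1) * (P*a*(a+1)) / ((fact d*d1*d2) * (fact j*j1) * (Q*b))"
  proof -
    have "cc mu (n+2) (j+1) = (-1)^(j+1) * pochhammer (2*mu) ((2*j+d+2)+2) / (fact (d+2) * fact (j+1) * pochhammer (mu+1/2) (j+1))"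
    proof -
      have i: "n+2+(j+1) = (2*j+d+2)+2" "n+2-(j+1) = d+2" "j+1 \<le> n+2" using n by auto
      show ?thesis by (simp only: cc_def i if_True)
    qed
    thus ?thesis unfolding poch2 fact1 fact2 poch1 P_def Q_def a_def b_def d1_def d2_def j1_def by (simp add: algebra_simps)
  qed
  have c2: "cc mu (n+1) (j+1) = (-1)^(j+1) * (P*a) / ((fact d*d1) * (fact j*j1) * (Q*b))"
  proof -
    have "cc mu (n+1) (j+1) = (-1)^(j+1) * pochhammer (2*mu) ((2*j+d+2)+1) / (fact (d+1) * fact (j+1) * pochhammer (mu+1/2) (j+1))"
    proof -
      have i: "n+1+(j+1) = (2*j+d+2)+1" "n+1-(j+1) = d+1" "j+1 \<le> n+1" using n by auto
      show ?thesis by (simp only: cc_def i if_True)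
    qed
    thus ?thesis unfolding fact1 poch1 P_def Q_def a_def b_def d1_def d2_def j1_def by (simp add: algebra_simps)
  qed
  have c3: "ccm mu (n+1) (j+1) = (-1)^j * P / ((fact d*d1*d2) * fact j * Q)"
  proof -
    have "ccm mu (n+1) (j+1) = (-1)^j * pochhammer (2*mu) (2*j+d+2) / (fact (d+2) * fact j * pochhammer (mu+1/2) j)"
    proof -
      have i: "n+1+j = 2*j+d+2" "n+1-j = d+2" "j \<le> n+1" "j+1-1 = j" "(j+1 = 0) = False" using n by auto
      show ?thesis by (simp only: ccm_def cc_def i if_True if_False)
    qed
    thus ?thesis unfolding fact2 P_def Q_def d1_def d2_def by (simp add: algebra_simps)
  qed
  have c4: "cc mu n (j+1) = (-1)^(j+1) * P / (fact d * (fact j*j1) * (Q*b))"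
  proof -
    have "cc mu n (j+1) = (-1)^(j+1) * pochhammer (2*mu) (2*j+d+2) / (fact d * fact (j+1) * pochhammer (mu+1/2) (j+1))"
    proof -
      have i: "n+(j+1) = 2*j+d+2" "n-(j+1) = d" "j+1 \<le> n" using n by auto
      show ?thesis by (simp only: cc_def i if_True)
    qed
    thus ?thesis unfolding fact1 poch1 P_def Q_def a_def b_def d1_def d2_def j1_def by (simp add: algebra_simps)
  qed
  have key: "(real n + 2) * a * (a+1) = 2*(n+1+mu)*(a*d2 + 2*j1*b) - (n+2*mu)*d1*d2"
    unfolding a_def b_def n d1_def d2_def j1_def by (simp add: algebra_simps)
  define E where "E = (-1)^(j+1) * P / (fact d*fact j*Q*d1*d2*j1*b)"
  have f0: "fact d > (0::real)" "fact j > (0::real)" by auto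
  have pos: "d1 > 0" "d2 > 0" "j1 > 0" by (auto simp: d1_def d2_def j1_def)
  have e1: "cc mu (n+2) (j+1) = E*(a*(a+1))" unfolding c1 E_def using Q b f0 pos by (simp add: field_simps)
  have e2: "cc mu (n+1) (j+1) = E*(a*d2)" unfolding c2 E_def using Q b f0 pos by (simp add: field_simps)
  have e3: "ccm mu (n+1) (j+1) = E*(-j1*b)" unfolding c3 E_def using Q b f0 pos by (simp add: field_simps)
  have e4: "cc mu n (j+1) = E*(d1*d2)" unfolding c4 E_def using Q b f0 pos by (simp add: field_simps)
  show ?thesis unfolding e1 e2 e3 e4 using arg_cong[OF key, of "\<lambda>z. E*z"]
    by (simp add: algebra_simps)
qed

lemma case0:
  fixes mu :: real
  assumes mu: "mu > 0"
  shows "(real n+2) * cc mu (n+2) 0 = 2*(n+1+mu)*(cc mu (n+1) 0 - 2*ccm mu (n+1) 0) - (n+2*mu)*cc mu n 0"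
proof -
  define P where "P = pochhammer (2*mu) n"
  define a where "a = 2*mu + n"
  define n1 where "n1 = real n + 1"
  define n2 where "n2 = real n + 2"
  have pos: "n1 > 0" "n2 > 0" "fact n > (0::real)" by (auto simp: n1_def n2_def)
  define E where "E = P / (fact n * n1 * n2)"
  have fo: "pochhammer (2*mu) n = P" "2*mu + of_nat n = a" "of_nat n + 1 = n1" "of_nat n + 2 = n2"
    by (simp_all add: P_def a_def n1_def n2_def)
  have i: "\<And>m::nat. m + 0 = m" "\<And>m::nat. m - 0 = m" "\<And>m::nat. (0 \<le> m) = True" by auto
  have e1: "cc mu (n+2) 0 = E*(a*(a+1))"
    unfolding E_def using pos
    by (simp only: cc_def i if_True poch2 fact2 fo) (simp add: field_simps)
  have e2: "cc mu (n+1) 0 = E*(a*n2)"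
    unfolding E_def using pos
    by (simp only: cc_def i if_True poch1 fact1 fo) (simp add: field_simps)
  have e3: "cc mu n 0 = E*(n1*n2)"
    unfolding E_def using pos
    by (simp only: cc_def i if_True fo) (simp add: field_simps)
  have key: "(real n + 2) * (a*(a+1)) = 2*(n+1+mu)*(a*n2) - (n+2*mu)*(n1*n2)"
    unfolding a_def n1_def n2_def by (simp add: algebra_simps)
  show ?thesis unfolding e1 e2 e3 ccm_def using arg_cong[OF key, of "\<lambda>z. E*z"]
    by (simp add: algebra_simps)
qed

lemma case_n1:
  fixes mu :: real
  assumes mu: "mu > 0"
  shows "(real n+2) * cc mu (n+2) (n+1) = 2*(n+1+mu)*(cc mu (n+1) (n+1) - 2*ccm mu (n+1) (n+1)) - (n+2*mu)*cc mu n (n+1)"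
proof -
  define P where "P = pochhammer (2*mu) (2*n+1)"
  define Q where "Q = pochhammer (mu+1/2) n"
  define a where "a = 2*mu + (2*n+1)"
  define b where "b = mu + 1/2 + n"
  define n1 where "n1 = real n + 1"
  have Q: "Q > 0" unfolding Q_def using poch_pos[OF mu] by simp
  have pos: "n1 > 0" "b > 0" "fact n > (0::real)" using mu by (auto simp: n1_def b_def)
  define E where "E = (-1)^(n+1) * P / (fact n * n1 * Q * b)"
  have fo: "pochhammer (2*mu) (2*n+1) = P" "pochhammer (mu+1/2) n = Q" "2*mu + of_nat (2*n+1) = a"
     "of_nat n + 1 = n1" "mu + 1/2 + of_nat n = b"
    by (simp_all add: P_def Q_def a_def n1_def b_def)
  have e1: "cc mu (n+2) (n+1) = E*(a*(a+1))"
  proof -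
    have i: "n+2+(n+1) = (2*n+1)+2" "n+2-(n+1) = 1" "n+1 \<le> n+2" by auto
    show ?thesis
      unfolding E_def using pos Q by (simp only: cc_def i if_True poch2[of "2*mu" "2*n+1"] poch1[of "mu+1/2" n] fact1[of n] fo) (simp add: field_simps)
  qed
  have e2: "cc mu (n+1) (n+1) = E*a"
  proof -
    have i: "n+1+(n+1) = (2*n+1)+1" "n+1-(n+1) = 0" "n+1 \<le> n+1" by auto
    show ?thesis
      unfolding E_def using pos Q by (simp only: cc_def i if_True poch1[of "2*mu" "2*n+1"] poch1[of "mu+1/2" n] fact1[of n] fo) (simp add: field_simps)
  qed
  have e3: "ccm mu (n+1) (n+1) = E*(-n1*b)"
  proof -
    have i: "n+1+n = 2*n+1" "n+1-n = 1" "n \<le> n+1" "n+1-1 = n" "(n+1 = 0) = False" by auto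
    show ?thesis
      unfolding E_def using pos Q by (simp only: ccm_def cc_def i if_True if_False fo) (simp add: field_simps)
  qed
  have e4: "cc mu n (n+1) = 0" by (simp add: cc_def)
  have key: "(real n + 2) * (a*(a+1)) = 2*(n+1+mu)*(a - 2*(-n1*b))"
    unfolding a_def n1_def b_def by (simp add: field_simps)
  show ?thesis unfolding e1 e2 e3 e4 using arg_cong[OF key, of "\<lambda>z. E*z"]
    by (simp add: algebra_simps)
qed

lemma case_n2:
  fixes mu :: real
  assumes mu: "mu > 0"
  shows "(real n+2) * cc mu (n+2) (n+2) = 2*(n+1+mu)*(cc mu (n+1) (n+2) - 2*ccm mu (n+1) (n+2)) - (n+2*mu)*cc mu n (n+2)"
proof -
  define P where "P = pochhammer (2*mu) (2*n+2)"
  define Q where "Q = pochhammer (mu+1/2) (n+1)"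
  define a where "a = 2*mu + (2*n+2)"
  define b where "b = mu + 1/2 + (n+1)"
  define n2 where "n2 = real n + 2"
  have Q: "Q > 0" unfolding Q_def using poch_pos[OF mu] by simp
  have pos: "n2 > 0" "b > 0" "fact (n+1) > (0::real)" using mu by (auto simp: n2_def b_def)
  define Fn where "Fn = (fact (n+1) :: real)"
  have Fn: "Fn > 0" by (simp add: Fn_def)
  define E where "E = (-1)^n * P / (Fn * n2 * Q * b)"
  have fo: "pochhammer (2*mu) (2*n+2) = P" "pochhammer (mu+1/2) (n+1) = Q" "2*mu + of_nat (2*n+2) = a"
     "of_nat (n+1) + 1 = n2" "mu + 1/2 + of_nat (n+1) = b" "fact (n+1) = Fn"
    by (simp_all add: Fn_def add: P_def Q_def a_def n2_def b_def)
  have e1: "cc mu (n+2) (n+2) = E*(a*(a+1))"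
  proof -
    have i: "n+2+(n+2) = (2*n+2)+2" "n+2-(n+2) = 0" "n+2 \<le> n+2" by auto
    have f: "(fact (n+2)::real) = fact (n+1) * n2" unfolding n2_def
      by (metis fact1 add_2_eq_Suc' add.commute of_nat_Suc plus_1_eq_Suc add.assoc one_add_one semiring_norm(3))
    have p: "pochhammer (mu+1/2) (n+2) = Q * b" unfolding Q_def b_def
      by (simp add: pochhammer_Suc numeral_2_eq_2 algebra_simps)
    show ?thesis
      unfolding E_def using pos Q Fn by (simp only: cc_def i if_True poch2[of "2*mu" "2*n+2"] f p fo) (simp add: field_simps)
  qed
  have e3: "ccm mu (n+1) (n+2) = E*(-n2*b)"
  proof -
    have i: "n+1+(n+1) = 2*n+2" "n+1-(n+1) = 0" "n+1 \<le> n+1" "n+2-1 = n+1" "(n+2 = 0) = False" by auto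
    show ?thesis
      unfolding E_def using pos Q Fn by (simp only: ccm_def cc_def i if_True if_False fo) (simp add: field_simps)
  qed
  have e2: "cc mu (n+1) (n+2) = 0" "cc mu n (n+2) = 0" by (simp_all add: cc_def)
  have key: "(real n + 2) * (a*(a+1)) = 2*(n+1+mu)*(0 - 2*(-n2*b))"
    unfolding a_def n2_def b_def by (simp add: field_simps)
  show ?thesis unfolding e1 e2 e3 using arg_cong[OF key, of "\<lambda>z. E*z"]
    by (simp add: algebra_simps)
qed

lemma cc_coef:
  fixes mu :: real
  assumes mu: "mu > 0"
  shows "(real n+2) * cc mu (n+2) k = 2*(n+1+mu)*(cc mu (n+1) k - 2*ccm mu (n+1) k) - (n+2*mu)*cc mu n k"
proof -
  consider "k = 0" | j d where "k = j+1" "n = j + 1 + d" | "k = n+1" | "k = n+2" | "k > n+2"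
  proof -
    assume c0: "k = 0 \<Longrightarrow> thesis" and c2: "\<And>j d. k = j+1 \<Longrightarrow> n = j+1+d \<Longrightarrow> thesis"
      and c3: "k = n+1 \<Longrightarrow> thesis" and c4: "k = n+2 \<Longrightarrow> thesis" and c5: "k > n+2 \<Longrightarrow> thesis"
    show thesis
    proof (cases "k = 0")
      case True thus ?thesis by (rule c0)
    next
      case False
      then obtain j where j: "k = j+1" by (metis Suc_eq_plus1 not0_implies_Suc)
      show ?thesis
      proof (cases "k \<le> n")
        case True
        then obtain d where "n = k + d" using le_Suc_ex by blast
        thus ?thesis using c2 j by blast
      next
        case False
        thus ?thesis using c3 c4 c5 by (cases "k = n+1"; cases "k = n+2") auto
      qed
    qed
  qed
  then show ?thesis
  proof cases
    case 1 thus ?thesis using case0[OF mu] by simp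
  next
    case 2 thus ?thesis using case2[OF mu 2(2)] by simp
  next
    case 3 thus ?thesis using case_n1[OF mu] by simp
  next
    case 4 thus ?thesis using case_n2[OF mu] by simp
  next
    case 5 thus ?thesis by (simp add: cc_def ccm_def)
  qed
qed




lemma cc_ext: "m \<le> N \<Longrightarrow> (\<Sum>k\<le>m. cc mu m k * y^k) = (\<Sum>k\<le>N. cc mu m k * y^k)"
  by (intro sum.mono_neutral_left) (auto simp: cc_def)

lemma ccm_shift: "y * (\<Sum>k\<le>m. cc mu m k * y^k) = (\<Sum>k\<le>Suc m. ccm mu m k * y^k)"
  by (subst sum.atMost_Suc_shift) (simp add: ccm_def sum_distrib_left algebra_simps)

lemma sum_lin: "(\<Sum>k\<in>S. (A*(f k - 2*g k) - B*h k)*(y::real)^k) = A*(\<Sum>k\<in>S. f k*y^k) - 2*A*(\<Sum>k\<in>S. g k*y^k) - B*(\<Sum>k\<in>S. h k*y^k)"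
proof -
  have "(\<Sum>k\<in>S. (A*(f k - 2*g k) - B*h k)*(y::real)^k) = (\<Sum>k\<in>S. A*(f k*y^k) - (2*A)*(g k*y^k) - B*(h k*y^k))"
    by (rule sum.cong) (auto simp: algebra_simps)
  also have "\<dots> = A*(\<Sum>k\<in>S. f k*y^k) - 2*A*(\<Sum>k\<in>S. g k*y^k) - B*(\<Sum>k\<in>S. h k*y^k)"
    by (simp add: sum_subtractf sum_distrib_left)
  finally show ?thesis .
qed

lemma E_rec:
  fixes mu y :: real
  assumes mu: "mu > 0"
  shows "(real n+2) * (\<Sum>k\<le>n+2. cc mu (n+2) k * y^k) =
     2*(1-2*y)*(real n+1+mu)*(\<Sum>k\<le>n+1. cc mu (n+1) k * y^k) - (real n+2*mu)*(\<Sum>k\<le>n. cc mu n k * y^k)"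
proof -
  have a: "(\<Sum>k\<le>n+1. cc mu (n+1) k * y^k) = (\<Sum>k\<le>n+2. cc mu (n+1) k * y^k)" by (rule cc_ext) simp
  have b: "(\<Sum>k\<le>n. cc mu n k * y^k) = (\<Sum>k\<le>n+2. cc mu n k * y^k)" by (rule cc_ext) simp
  have c: "y * (\<Sum>k\<le>n+1. cc mu (n+1) k * y^k) = (\<Sum>k\<le>n+2. ccm mu (n+1) k * y^k)"
    using ccm_shift[where y=y and m="n+1" and mu=mu] by simp
  have "2*(1-2*y)*(real n+1+mu)*(\<Sum>k\<le>n+1. cc mu (n+1) k * y^k) - (real n+2*mu)*(\<Sum>k\<le>n. cc mu n k * y^k)
      = 2*(real n+1+mu)*((\<Sum>k\<le>n+1. cc mu (n+1) k * y^k) - 2*(y * (\<Sum>k\<le>n+1. cc mu (n+1) k * y^k))) - (real n+2*mu)*(\<Sum>k\<le>n. cc mu n k * y^k)"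
    by (simp add: algebra_simps)
  also have "\<dots> = (\<Sum>k\<le>n+2. (2*(real n+1+mu)*(cc mu (n+1) k - 2*ccm mu (n+1) k) - (real n+2*mu)*cc mu n k) * y^k)"
    unfolding sum_lin c[symmetric] a[symmetric] b[symmetric] by (simp add: algebra_simps)
  also have "\<dots> = (\<Sum>k\<le>n+2. ((real n+2) * cc mu (n+2) k) * y^k)"
    by (rule sum.cong[OF refl]) (subst cc_coef[OF mu], simp)
  also have "\<dots> = (real n+2) * (\<Sum>k\<le>n+2. cc mu (n+2) k * y^k)"
    by (simp add: sum_distrib_left algebra_simps)
  finally show ?thesis ..
qed

lemma Cf_explicit:
  fixes mu x :: real
  assumes mu: "mu > 0"
  shows "Cf mu x n = (\<Sum>k\<le>n. cc mu n k * ((1-x)/2)^k)"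
proof (induction n rule: less_induct)
  case (less n)
  show ?case
  proof (cases n rule: nat_cases2_aux)
    case 1 thus ?thesis by (simp add: cc_def)
  next
    case 2
    have "pochhammer (2*mu) 2 = 2*mu*(2*mu+1)" by (simp add: pochhammer_Suc numeral_2_eq_2)
    moreover have "2*mu+1 = 2*(mu+1/2)" by simp
    ultimately show ?thesis using 2 mu by (simp add: cc_def field_simps pochhammer_Suc)
  next
    case (3 m)
    have h1: "Cf mu x (Suc m) = (\<Sum>k\<le>m+1. cc mu (m+1) k * ((1-x)/2)^k)" using less 3 by simp
    have h0: "Cf mu x m = (\<Sum>k\<le>m. cc mu m k * ((1-x)/2)^k)" using less 3 by simp
    have "Cf mu x n = (2*x*(real m+1+mu)*Cf mu x (Suc m) - (real m+2*mu)*Cf mu x m)/(real m+2)" using 3 by (simp add: add_ac)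
    also have "\<dots> = (2*x*(real m+1+mu)*(\<Sum>k\<le>m+1. cc mu (m+1) k * ((1-x)/2)^k) - (real m+2*mu)*(\<Sum>k\<le>m. cc mu m k * ((1-x)/2)^k))/(real m+2)"
      unfolding h1 h0 by simp
    also have "\<dots> = (\<Sum>k\<le>m+2. cc mu (m+2) k * ((1-x)/2)^k)"
    proof -
      define S0 where "S0 = (\<Sum>k\<le>m. cc mu m k * ((1-x)/2)^k)"
      define S1 where "S1 = (\<Sum>k\<le>m+1. cc mu (m+1) k * ((1-x)/2)^k)"
      define S2 where "S2 = (\<Sum>k\<le>m+2. cc mu (m+2) k * ((1-x)/2)^k)"
      have e: "(real m+2)*S2 = 2*(1-2*((1-x)/2))*(real m+1+mu)*S1 - (real m+2*mu)*S0"
        unfolding S0_def S1_def S2_def by (rule E_rec[OF mu])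
      have "2*(1-2*((1-x)/2)) = 2*x" by (simp add: field_simps)
      hence e2: "(real m+2)*S2 = 2*x*(real m+1+mu)*S1 - (real m+2*mu)*S0" using e by simp
      have "(2*x*(real m+1+mu)*S1 - (real m+2*mu)*S0)/(real m+2) = S2"
        unfolding e2[symmetric] by simp
      thus ?thesis unfolding S0_def S1_def S2_def .
    qed
    finally show ?thesis using 3 by simp
  qed
qed




lemma beta_minus:
  fixes a y :: real
  assumes a: "a > 0" and y: "y < 1"
  shows "((\<lambda>\<tau>. (\<tau>-y) powr (-1/2) * (1-\<tau>) powr (a-1)) has_integral (1-y) powr (a-1/2) * Beta (1/2) a) {y..1}"
proof -
  define m where "m = 1/(1-y)"
  define c where "c = -y/(1-y)"
  have m: "m > 0" using y by (simp add: m_def)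
  have B: "((\<lambda>t. t powr (1/2 - 1) * (1 - t) powr (a - 1)) has_integral Beta (1/2) a) (cbox 0 1)"
    using has_integral_Beta_real[of "1/2" a] a by simp
  have A: "((\<lambda>x. (\<lambda>t. t powr (1/2 - 1) * (1 - t) powr (a - 1)) (m *\<^sub>R x + c)) has_integral (Beta (1/2) a /\<^sub>R m ^ DIM(real))) (cbox ((0 - c) /\<^sub>R m) ((1 - c) /\<^sub>R m))"
    by (rule has_integral_affinity'[OF B m])
  have e1: "(0 - c) /\<^sub>R m = y" "(1 - c) /\<^sub>R m = 1" "Beta (1/2) a /\<^sub>R m ^ DIM(real) = Beta (1/2) a / m"
    using y by (simp_all add: m_def c_def field_simps)
  have "((\<lambda>x. (m*x+c) powr (1/2 - 1) * (1 - (m*x+c)) powr (a - 1)) has_integral Beta (1/2) a / m) {y..1}"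
    using A unfolding e1 by simp
  hence H: "((\<lambda>x. (1-y) powr (a - 3/2) * ((m*x+c) powr (1/2 - 1) * (1 - (m*x+c)) powr (a - 1))) has_integral (1-y) powr (a - 3/2) * (Beta (1/2) a / m)) {y..1}"
    by (rule has_integral_mult_right)
  have V: "(1-y) powr (a - 3/2) * (Beta (1/2) a / m) = (1-y) powr (a-1/2) * Beta (1/2) a"
  proof -
    have "(1-y) powr (a - 3/2) * (1-y) = (1-y) powr (a-1/2)"
      using y powr_add[of "1-y" "a-3/2" 1] by simp
    moreover have "(1-y) powr (a - 3/2) * (Beta (1/2) a / m) = Beta (1/2) a * ((1-y) powr (a - 3/2) * (1-y))"
      unfolding m_def using y by (simp add: field_simps)
    ultimately show ?thesis by simp
  qed
  have P: "(1-y) powr (a - 3/2) * ((m*x+c) powr (1/2 - 1) * (1 - (m*x+c)) powr (a - 1))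
      = (x-y) powr (-1/2) * (1-x) powr (a-1)" if x: "x \<in> {y..1}" for x
  proof -
    have ny: "1 - y \<noteq> 0" using y by simp
    have mx1: "m*x+c = (x-y)/(1-y)" unfolding m_def c_def by (simp add: diff_divide_distrib)
    have mx: "m*x+c = (x-y)/(1-y)" "1 - (m*x+c) = (1-x)/(1-y)" unfolding mx1 using ny by (simp_all add: field_simps)
    have p1: "((x-y)/(1-y)) powr (1/2-1) = (x-y) powr (-1/2) / (1-y) powr (-1/2)"
      using x y by (auto intro!: powr_divide)
    have p2: "((1-x)/(1-y)) powr (a-1) = (1-x) powr (a-1) / (1-y) powr (a-1)"
      using x y by (auto intro!: powr_divide)
    have p3: "(1-y) powr (-1/2) * (1-y) powr (a - 1) = (1-y) powr (a - 3/2)"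
      using powr_add[of "1-y" "-1/2" "a-1"] by simp
    have p4: "(1-y) powr (a - 3/2) > 0" using y by simp
    have p5: "(1-y) powr (-1/2) > 0" "(1-y) powr (a-1) > 0" using y by auto
    show ?thesis unfolding mx(2) unfolding mx(1) p1 p2 p3[symmetric] using p5
      by (simp add: field_simps)
  qed
  show ?thesis using iffD1[OF has_integral_cong[OF P] H] unfolding V .
qed

lemma beta_plus:
  fixes a y :: real
  assumes a: "a > 0" and y: "y > -1"
  shows "((\<lambda>\<tau>. (y-\<tau>) powr (-1/2) * (1+\<tau>) powr (a-1)) has_integral (1+y) powr (a-1/2) * Beta (1/2) a) {-1..y}"
proof -
  have "((\<lambda>\<tau>. (\<tau>-(-y)) powr (-1/2) * (1-\<tau>) powr (a-1)) has_integral (1-(-y)) powr (a-1/2) * Beta (1/2) a) {-y..1}"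
    using beta_minus[OF a, of "-y"] y by simp
  hence "((\<lambda>\<tau>. (-\<tau>-(-y)) powr (-1/2) * (1-(-\<tau>)) powr (a-1)) has_integral (1-(-y)) powr (a-1/2) * Beta (1/2) a) {-1..-(-y)}"
    by (subst has_integral_reflect_real[symmetric]) simp
  thus ?thesis by simp
qed

lemma powr_pow: "(x::real) \<ge> 0 \<Longrightarrow> x powr a * x^k = x powr (a + real k)"
  by (cases "x = 0") (auto simp: powr_add powr_realpow)

lemma Dminus_poly:
  fixes lam x :: real and c :: "nat \<Rightarrow> real"
  assumes lam: "lam > 0" and x: "x \<in> {-1..1}"
  shows "Dminus lam (\<lambda>\<tau>. \<Sum>k\<le>N. c k * (1-\<tau>)^k) x =
           -(\<Sum>k\<le>N. real k * c k * Beta (1/2) (lam + k + 1/2) * (1-x)^k)"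
proof -
  define B where "B k = Beta (1/2) (lam + real k + 1/2)" for k
  define p where "p y = (\<Sum>k\<le>N. c k * B k * (1-y)^k)" for y
  define G where "G y = (1 - y) powr (- lam) *
            integral {y..1} (\<lambda>\<tau>. (\<tau> - y) powr (-1/2) * (1 - \<tau>) powr (lam - 1/2) * (\<Sum>k\<le>N. c k * (1-\<tau>)^k))" for y
  have GP: "G y = p y" if y: "y < 1" for y
  proof -
    have I: "((\<lambda>\<tau>. \<Sum>k\<le>N. c k * ((\<tau>-y) powr (-1/2) * (1-\<tau>) powr ((lam + real k + 1/2) - 1)))
            has_integral (\<Sum>k\<le>N. c k * ((1-y) powr ((lam + real k + 1/2) - 1/2) * B k))) {y..1}"
      unfolding B_def
      by (intro has_integral_sum has_integral_mult_right beta_minus) (use lam y in auto)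
    have eq: "(\<tau> - y) powr (-1/2) * (1 - \<tau>) powr (lam - 1/2) * (\<Sum>k\<le>N. c k * (1-\<tau>)^k)
        = (\<Sum>k\<le>N. c k * ((\<tau>-y) powr (-1/2) * (1-\<tau>) powr ((lam + real k + 1/2) - 1)))"
      if t: "\<tau> \<in> {y..1}" for \<tau>
    proof -
      have h: "(1-\<tau>) powr (lam + real k - 1/2) = (1 - \<tau>) powr (lam - 1/2) * (1-\<tau>)^k" for k
        using powr_pow[of "1-\<tau>" "lam - 1/2" k] t by (simp add: algebra_simps)
      show ?thesis unfolding sum_distrib_left
        by (intro sum.cong refl) (simp add: h ac_simps)
    qed
    have "integral {y..1} (\<lambda>\<tau>. (\<tau> - y) powr (-1/2) * (1 - \<tau>) powr (lam - 1/2) * (\<Sum>k\<le>N. c k * (1-\<tau>)^k))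
        = (\<Sum>k\<le>N. c k * ((1-y) powr ((lam + real k + 1/2) - 1/2) * B k))"
      using iffD2[OF has_integral_cong[OF eq] I] by (rule integral_unique)
    hence "G y = (\<Sum>k\<le>N. c k * ((1 - y) powr (- lam) * (1-y) powr (lam + real k)) * B k)"
      unfolding G_def by (simp add: sum_distrib_left algebra_simps)
    also have "\<dots> = p y"
    proof -
      have "(1 - y) powr (- lam) * (1-y) powr (lam + real k) = (1-y)^k" for k
        using y by (simp add: powr_add[symmetric] powr_realpow)
      thus ?thesis unfolding p_def by (simp add: algebra_simps)
    qed
    finally show ?thesis .
  qed
  show ?thesis
  proof (cases "x = 1")
    case True
    have "(\<Sum>k\<le>N. real k * c k * Beta (1/2) (lam + k + 1/2) * (1-x)^k) = 0"
      using True by (intro sum.neutral) (auto simp: zero_power)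
    thus ?thesis unfolding Dminus_def using True by simp
  next
    case False
    hence x1: "x < 1" using x by simp
    define p' where "p' = (\<Sum>k\<le>N. c k * B k * (real k * (1-x)^(k-1) * -1))"
    have td: "((\<lambda>y. (1-y)^k) has_real_derivative (real k * (1-x)^(k-1) * -1)) (at x)" for k
      using DERIV_chain2[OF DERIV_pow[of k "1-x"] DERIV_diff[OF DERIV_const DERIV_ident, of 1 x]]
      by simp
    have pd: "(p has_real_derivative p') (at x within {-1..1})"
      unfolding p_def p'_def
      by (rule has_field_derivative_at_within, intro DERIV_sum DERIV_cmult td)
    have Gd: "(G has_vector_derivative p') (at x within {-1..1})"
      using pd unfolding has_real_derivative_iff_has_vector_derivative
      by (rule has_vector_derivative_transform_within[of _ _ _ _ "1-x"]) (use x x1 GP in \<open>auto simp: dist_real_def\<close>)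
    have "Dminus lam (\<lambda>\<tau>. \<Sum>k\<le>N. c k * (1-\<tau>)^k) x = (1-x) * p'"
      unfolding Dminus_def G_def[symmetric]
      by (subst vector_derivative_within_closed_interval[OF _ x Gd]) auto
    also have "\<dots> = -(\<Sum>k\<le>N. real k * c k * B k * (1-x)^k)"
    proof -
      have "(1-x) * (c k * B k * (real k * (1-x)^(k-1) * -1)) = -(real k * c k * B k * (1-x)^k)" for k
        by (cases k) (auto simp: algebra_simps)
      thus ?thesis unfolding p'_def sum_distrib_left sum_negf[symmetric] by (intro sum.cong refl)
    qed
    finally show ?thesis by (simp add: B_def)
  qed
qed

lemma Dplus_poly:
  fixes lam x :: real and c :: "nat \<Rightarrow> real"
  assumes lam: "lam > 0" and x: "x \<in> {-1..1}"
  shows "Dplus lam (\<lambda>\<tau>. \<Sum>k\<le>N. c k * (1+\<tau>)^k) x =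
           (\<Sum>k\<le>N. real k * c k * Beta (1/2) (lam + k + 1/2) * (1+x)^k)"
proof -
  define B where "B k = Beta (1/2) (lam + real k + 1/2)" for k
  define p where "p y = (\<Sum>k\<le>N. c k * B k * (1+y)^k)" for y
  define G where "G y = (1 + y) powr (- lam) *
            integral {-1..y} (\<lambda>\<tau>. (y - \<tau>) powr (-1/2) * (1 + \<tau>) powr (lam - 1/2) * (\<Sum>k\<le>N. c k * (1+\<tau>)^k))" for y
  have GP: "G y = p y" if y: "y > -1" for y
  proof -
    have I: "((\<lambda>\<tau>. \<Sum>k\<le>N. c k * ((y-\<tau>) powr (-1/2) * (1+\<tau>) powr ((lam + real k + 1/2) - 1)))
            has_integral (\<Sum>k\<le>N. c k * ((1+y) powr ((lam + real k + 1/2) - 1/2) * B k))) {-1..y}"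
      unfolding B_def
      by (intro has_integral_sum has_integral_mult_right beta_plus) (use lam y in auto)
    have eq: "(y - \<tau>) powr (-1/2) * (1 + \<tau>) powr (lam - 1/2) * (\<Sum>k\<le>N. c k * (1+\<tau>)^k)
        = (\<Sum>k\<le>N. c k * ((y-\<tau>) powr (-1/2) * (1+\<tau>) powr ((lam + real k + 1/2) - 1)))"
      if t: "\<tau> \<in> {-1..y}" for \<tau>
    proof -
      have h: "(1+\<tau>) powr (lam + real k - 1/2) = (1 + \<tau>) powr (lam - 1/2) * (1+\<tau>)^k" for k
        using powr_pow[of "1+\<tau>" "lam - 1/2" k] t by (simp add: algebra_simps)
      show ?thesis unfolding sum_distrib_left
        by (intro sum.cong refl) (simp add: h ac_simps)
    qed
    have "integral {-1..y} (\<lambda>\<tau>. (y - \<tau>) powr (-1/2) * (1 + \<tau>) powr (lam - 1/2) * (\<Sum>k\<le>N. c k * (1+\<tau>)^k))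
        = (\<Sum>k\<le>N. c k * ((1+y) powr ((lam + real k + 1/2) - 1/2) * B k))"
      using iffD2[OF has_integral_cong[OF eq] I] by (rule integral_unique)
    hence "G y = (\<Sum>k\<le>N. c k * ((1 + y) powr (- lam) * (1+y) powr (lam + real k)) * B k)"
      unfolding G_def by (simp add: sum_distrib_left algebra_simps)
    also have "\<dots> = p y"
    proof -
      have "(1 + y) powr (- lam) * (1+y) powr (lam + real k) = (1+y)^k" for k
        using y by (simp add: powr_add[symmetric] powr_realpow)
      thus ?thesis unfolding p_def by (simp add: algebra_simps)
    qed
    finally show ?thesis .
  qed
  show ?thesis
  proof (cases "x = -1")
    case True
    have "(\<Sum>k\<le>N. real k * c k * Beta (1/2) (lam + k + 1/2) * (1+x)^k) = 0"
      using True by (intro sum.neutral) (auto simp: zero_power)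
    thus ?thesis unfolding Dplus_def using True by simp
  next
    case False
    hence x1: "x > -1" using x by simp
    define p' where "p' = (\<Sum>k\<le>N. c k * B k * (real k * (1+x)^(k-1) * 1))"
    have td: "((\<lambda>y. (1+y)^k) has_real_derivative (real k * (1+x)^(k-1) * 1)) (at x)" for k
      using DERIV_chain2[OF DERIV_pow[of k "1+x"] DERIV_add[OF DERIV_const DERIV_ident, of 1 x]]
      by simp
    have pd: "(p has_real_derivative p') (at x within {-1..1})"
      unfolding p_def p'_def
      by (rule has_field_derivative_at_within, intro DERIV_sum DERIV_cmult td)
    have Gd: "(G has_vector_derivative p') (at x within {-1..1})"
      using pd unfolding has_real_derivative_iff_has_vector_derivative
      by (rule has_vector_derivative_transform_within[of _ _ _ _ "1+x"]) (use x x1 GP in \<open>auto simp: dist_real_def\<close>)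
    have "Dplus lam (\<lambda>\<tau>. \<Sum>k\<le>N. c k * (1+\<tau>)^k) x = (1+x) * p'"
      unfolding Dplus_def G_def[symmetric]
      by (subst vector_derivative_within_closed_interval[OF _ x Gd]) auto
    also have "\<dots> = (\<Sum>k\<le>N. real k * c k * B k * (1+x)^k)"
    proof -
      have "(1+x) * (c k * B k * (real k * (1+x)^(k-1) * 1)) = (real k * c k * B k * (1+x)^k)" for k
        by (cases k) (auto simp: algebra_simps)
      thus ?thesis unfolding p'_def sum_distrib_left by (intro sum.cong refl)
    qed
    finally show ?thesis by (simp add: B_def)
  qed
qed




lemma Cf_neg: "Cf mu (-x) n = (-1)^n * Cf mu x n"
proof (induction n rule: less_induct)
  case (less n)
  show ?case
  proof (cases n rule: nat_cases2_aux)
    case 1 thus ?thesis by simp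
  next
    case 2 thus ?thesis by simp
  next
    case (3 m)
    have h1: "Cf mu (-x) (Suc m) = -((-1)^m * Cf mu x (Suc m))" using less[of "Suc m"] 3 by simp
    have h0: "Cf mu (-x) m = (-1)^m * Cf mu x m" using less[of m] 3 by simp
    show ?thesis unfolding 3 Cf.simps h1 h0 by (simp add: field_simps)
  qed
qed

definition KK :: "real \<Rightarrow> real" where "KK lam = sqrt pi * Gamma (lam + 1/2) / Gamma lam"

lemma B_eq:
  fixes lam :: real
  assumes lam: "lam > 0"
  shows "Beta (1/2) (lam + real k + 1/2) = KK lam * pochhammer (lam+1/2) k / pochhammer lam (k+1)"
proof -
  have nz: "z \<notin> \<int>\<^sub>\<le>\<^sub>0" if "z > 0" for z :: real using that nonpos_Ints_nonpos by force
  have G1: "Gamma (lam+1/2) > 0" "Gamma lam > 0" using lam by (auto intro!: Gamma_real_pos)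
  have g1: "Gamma (lam + 1/2 + real k) = pochhammer (lam+1/2) k * Gamma (lam + 1/2)"
  proof -
    have e: "pochhammer (lam+1/2) k = Gamma (lam + 1/2 + real k) / Gamma (lam + 1/2)"
      by (rule pochhammer_Gamma[OF nz]) (use lam in simp)
    have "Gamma (lam + 1/2) \<noteq> 0" using G1 by linarith
    thus ?thesis unfolding e by simp
  qed
  have g2: "Gamma (lam + real (k+1)) = pochhammer lam (k+1) * Gamma lam"
  proof -
    have e: "pochhammer lam (k+1) = Gamma (lam + real (k+1)) / Gamma lam"
      by (rule pochhammer_Gamma[OF nz]) (use lam in simp)
    have "Gamma lam \<noteq> 0" using G1 by linarith
    thus ?thesis unfolding e by simp
  qed
  have "Beta (1/2) (lam + real k + 1/2) = Gamma (1/2) * Gamma (lam + 1/2 + real k) / Gamma (lam + real (k+1))"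
    unfolding Beta_def by (simp add: add_ac)
  also have "\<dots> = sqrt pi * (pochhammer (lam+1/2) k * Gamma (lam + 1/2)) / (pochhammer lam (k+1) * Gamma lam)"
    unfolding g1 g2 Gamma_one_half_real ..
  finally show ?thesis unfolding KK_def by (simp add: ac_simps)
qed

lemma alg1:
  fixes Fd d1 Fk PH PL l K sg R al be c k :: real
  assumes nz: "Fd \<noteq> 0" "d1 \<noteq> 0" "Fk \<noteq> 0" "PH \<noteq> 0" "PL \<noteq> 0" "l \<noteq> 0"
  and key: "al*d1 - be*c = -2*k"
  shows "-(k*(sg*(2*l*R)/(Fd*d1*Fk*PH))*(K*PH/(l*PL))) = K*(al*(sg*R/(Fd*Fk*PL)) - be*(sg*(R*c)/(Fd*d1*Fk*PL)))"
proof -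
  have "K*(al*(sg*R/(Fd*Fk*PL)) - be*(sg*(R*c)/(Fd*d1*Fk*PL))) = K* sg*R/(Fd*d1*Fk*PL) * (al*d1 - be*c)"
    using nz by (simp add: field_simps)
  moreover have "-(k*(sg*(2*l*R)/(Fd*d1*Fk*PH))*(K*PH/(l*PL))) = K* sg*R/(Fd*d1*Fk*PL) * (-2*k)"
    using nz by (simp add: field_simps)
  ultimately show ?thesis using key by simp
qed

lemma alg2:
  fixes Fk PH PL l K sg R al be c k :: real
  assumes nz: "Fk \<noteq> 0" "PH \<noteq> 0" "PL \<noteq> 0" "l \<noteq> 0"
  and key: "be*c = 2*k"
  shows "-(k*(sg*(2*l*R)/(1*Fk*PH))*(K*PH/(l*PL))) = K*(al*0 - be*(sg*(R*c)/(1*Fk*PL)))"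
proof -
  have "K*(al*0 - be*(sg*(R*c)/(1*Fk*PL))) = K* sg*R/(Fk*PL) * (-(be*c))"
    using nz by (simp add: field_simps)
  moreover have "-(k*(sg*(2*l*R)/(1*Fk*PH))*(K*PH/(l*PL))) = K* sg*R/(Fk*PL) * (-2*k)"
    using nz by (simp add: field_simps)
  ultimately show ?thesis using key by simp
qed

lemma core_coef:
  fixes lam :: real
  assumes lam: "lam > 0" and k: "k \<le> m+1"
  shows "-(real k * cc lam (m+1) k * (KK lam * pochhammer (lam+1/2) k / pochhammer lam (k+1))) =
     KK lam * ((real m+1+2*lam)/(real m+1+lam) * cc (lam+1/2) m k - (real m+1)/(real m+1+lam) * cc (lam+1/2) (m+1) k)"
proof -
  define R where "R = pochhammer (2*lam+1) (m+k)"
  define PH where "PH = pochhammer (lam+1/2) k"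
  define PL where "PL = pochhammer (lam+1) k"
  define Fk where "Fk = (fact k :: real)"
  define c where "c = 2*lam+1+real (m+k)"
  define al where "al = (real m+1+2*lam)/(real m+1+lam)"
  define be where "be = (real m+1)/(real m+1+lam)"
  have nz: "Fk \<noteq> 0" "PH \<noteq> 0" "PL \<noteq> 0" "lam \<noteq> 0"
    unfolding Fk_def PH_def PL_def using lam
    by (auto simp: pochhammer_eq_0_iff dest!: nonpos_Ints_nonpos)
  have p1: "pochhammer (2*lam) (m+1+k) = 2*lam * R"
    unfolding R_def by (simp add: pochhammer_rec add_ac)
  have p2: "pochhammer lam (k+1) = lam * PL"
    unfolding PL_def by (simp add: pochhammer_rec)
  have p3: "pochhammer (2*(lam+1/2)) (m+k) = R" unfolding R_def by (simp add: algebra_simps)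
  have p4: "pochhammer (2*(lam+1/2)) (m+1+k) = R * c"
    unfolding R_def c_def by (simp add: pochhammer_Suc algebra_simps)
  have p5: "pochhammer (lam+1/2+1/2) k = PL" unfolding PL_def by (simp add: add.assoc)
  have fo: "pochhammer (lam+1/2) k = PH" "(fact k :: real) = Fk" by (simp_all add: PH_def Fk_def)
  show ?thesis
  proof (cases "k \<le> m")
    case True
    define Fd where "Fd = (fact (m-k) :: real)"
    define d1 where "d1 = real (m-k) + 1"
    have nz2: "Fd \<noteq> 0" "d1 \<noteq> 0" by (auto simp: Fd_def d1_def)
    have i: "m+1-k = (m-k)+1" using True by simp
    have f1: "(fact (m+1-k) :: real) = Fd * d1" unfolding i Fd_def d1_def by (rule fact1)
    have c1: "cc lam (m+1) k = (-1)^k * (2*lam*R) / (Fd*d1*Fk*PH)"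
      unfolding cc_def using k by (simp only: if_True f1 p1 fo)
    have c2: "cc (lam+1/2) m k = (-1)^k * R / (Fd*Fk*PL)"
      unfolding cc_def using True by (simp only: if_True p3 p5 fo Fd_def[symmetric])
    have c3: "cc (lam+1/2) (m+1) k = (-1)^k * (R*c) / (Fd*d1*Fk*PL)"
      unfolding cc_def using k by (simp only: if_True p4 p5 fo f1)
    have q: "real m+1+lam \<noteq> 0" using lam by simp
    have num: "(real m+1+2*lam)*d1 - (real m+1)*c = -2*real k*(real m+1+lam)"
      unfolding d1_def c_def using True by (simp add: of_nat_diff algebra_simps)
    have "al*d1 - be*c = ((real m+1+2*lam)*d1 - (real m+1)*c)/(real m+1+lam)"
      unfolding al_def be_def by (simp add: diff_divide_distrib)
    hence key: "al*d1 - be*c = -2*real k" unfolding num using q by simp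
    show ?thesis unfolding c1 c2 c3 p2 fo al_def[symmetric] be_def[symmetric]
      using alg1[OF nz2(1,2) nz key, of "(-1)^k" R "KK lam"] by (simp add: mult.assoc)
  next
    case False
    hence km: "k = m+1" using k by simp
    have i2: "m+1-k = 0" using km by simp
    have c1: "cc lam (m+1) k = (-1)^k * (2*lam*R) / (1*Fk*PH)"
      unfolding cc_def using k i2 by (simp only: if_True p1 fo i2 fact_0)
    have c2: "cc (lam+1/2) m k = 0" unfolding cc_def using km by simp
    have c3: "cc (lam+1/2) (m+1) k = (-1)^k * (R*c) / (1*Fk*PL)"
      unfolding cc_def using k i2 by (simp only: if_True p4 p5 fo i2 fact_0)
    have key: "be*c = 2*real k"
      unfolding be_def c_def using km lam by (simp add: field_simps)
    show ?thesis unfolding c1 c2 c3 p2 fo al_def[symmetric] be_def[symmetric]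
      using alg2[OF nz key, of "(-1)^k" R "KK lam" al] by (simp add: mult.assoc)
  qed
qed




lemma geg_minus:
  assumes lam: "lam > 0"
  shows "gegenbauer lam n = (\<lambda>\<tau>. \<Sum>k\<le>n. (cc lam n k / 2^k) * (1-\<tau>)^k)"
proof
  fix \<tau> :: real
  show "gegenbauer lam n \<tau> = (\<Sum>k\<le>n. (cc lam n k / 2^k) * (1-\<tau>)^k)"
    unfolding gegenbauer_Cf Cf_explicit[OF lam] by (simp add: power_divide)
qed

lemma geg_plus:
  assumes lam: "lam > 0"
  shows "gegenbauer lam n = (\<lambda>\<tau>. \<Sum>k\<le>n. ((-1)^n * cc lam n k / 2^k) * (1+\<tau>)^k)"
proof
  fix \<tau> :: real
  have "Cf lam \<tau> n = (-1)^n * Cf lam (-\<tau>) n"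
    using Cf_neg[of lam \<tau> n] by (simp flip: power_mult_distrib)
  also have "\<dots> = (\<Sum>k\<le>n. ((-1)^n * cc lam n k / 2^k) * (1+\<tau>)^k)"
    unfolding Cf_explicit[OF lam] by (simp add: power_divide sum_distrib_left algebra_simps)
  finally show "gegenbauer lam n \<tau> = (\<Sum>k\<le>n. ((-1)^n * cc lam n k / 2^k) * (1+\<tau>)^k)"
    unfolding gegenbauer_Cf .
qed

lemma DM:
  assumes lam: "lam > 0" and x: "x \<in> {-1..1}"
  shows "Dminus lam (gegenbauer lam n) x =
     -(\<Sum>k\<le>n. real k * cc lam n k * Beta (1/2) (lam + k + 1/2) * ((1-x)/2)^k)"
  unfolding geg_minus[OF lam] Dminus_poly[OF lam x]
  by (simp add: power_divide algebra_simps)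

lemma DP:
  assumes lam: "lam > 0" and x: "x \<in> {-1..1}"
  shows "Dplus lam (gegenbauer lam n) x =
     (-1)^n * (\<Sum>k\<le>n. real k * cc lam n k * Beta (1/2) (lam + k + 1/2) * ((1+x)/2)^k)"
  unfolding geg_plus[OF lam] Dplus_poly[OF lam x]
  by (simp add: power_divide sum_distrib_left algebra_simps)

lemma core_sum:
  fixes lam y :: real
  assumes lam: "lam > 0"
  shows "-(\<Sum>k\<le>m+1. real k * cc lam (m+1) k * Beta (1/2) (lam + k + 1/2) * y^k) =
     KK lam * ((real m+1+2*lam)/(real m+1+lam) * (\<Sum>k\<le>m. cc (lam+1/2) m k * y^k)
               - (real m+1)/(real m+1+lam) * (\<Sum>k\<le>m+1. cc (lam+1/2) (m+1) k * y^k))"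
proof -
  define al where "al = (real m+1+2*lam)/(real m+1+lam)"
  define be where "be = (real m+1)/(real m+1+lam)"
  have "-(\<Sum>k\<le>m+1. real k * cc lam (m+1) k * Beta (1/2) (lam + k + 1/2) * y^k)
      = (\<Sum>k\<le>m+1. (-(real k * cc lam (m+1) k * (KK lam * pochhammer (lam+1/2) k / pochhammer lam (k+1)))) * y^k)"
    unfolding sum_negf[symmetric] by (intro sum.cong refl) (simp add: B_eq[OF lam])
  also have "\<dots> = (\<Sum>k\<le>m+1. (KK lam * (al * cc (lam+1/2) m k - be * cc (lam+1/2) (m+1) k)) * y^k)"
    by (intro sum.cong refl) (simp only: core_coef[OF lam] al_def be_def atMost_iff)
  also have "\<dots> = KK lam * (al * (\<Sum>k\<le>m+1. cc (lam+1/2) m k * y^k) - be * (\<Sum>k\<le>m+1. cc (lam+1/2) (m+1) k * y^k))"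
    by (simp add: sum_distrib_left sum_subtractf algebra_simps)
  also have "(\<Sum>k\<le>m+1. cc (lam+1/2) m k * y^k) = (\<Sum>k\<le>m. cc (lam+1/2) m k * y^k)"
    by (rule cc_ext[symmetric]) simp
  finally show ?thesis unfolding al_def be_def .
qed

lemma Pj_minus:
  assumes lam: "lam > 0"
  shows "(\<Sum>k\<le>j. cc (lam+1/2) j k * ((1-x)/2)^k) = gegenbauer (lam+1/2) j x"
  unfolding gegenbauer_Cf using Cf_explicit[of "lam+1/2" x j] lam by simp

lemma Pj_plus:
  assumes lam: "lam > 0"
  shows "(\<Sum>k\<le>j. cc (lam+1/2) j k * ((1+x)/2)^k) = (-1)^j * gegenbauer (lam+1/2) j x"
proof -
  have "(\<Sum>k\<le>j. cc (lam+1/2) j k * ((1+x)/2)^k) = Cf (lam+1/2) (-x) j"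
    using Cf_explicit[of "lam+1/2" "-x" j] lam by simp
  thus ?thesis unfolding gegenbauer_Cf Cf_neg .
qed

theorem theorem3p5:
  fixes lam :: real and n :: nat and x :: real
  assumes "lam > 0" and "x \<in> {-1..1}"
  shows "calDplus lam (gegenbauer lam n) x =
           sqrt pi * Gamma (lam + 1/2) / Gamma lam * (2 * (real n + 2 * lam) / (real n + lam)) *
           (if n = 0 then 0 else gegenbauer (lam + 1/2) (n - 1) x) \<and>
         calDminus lam (gegenbauer lam n) x =
           sqrt pi * Gamma (lam + 1/2) / Gamma lam * (2 * real n / (real n + lam)) *
           gegenbauer (lam + 1/2) n x"
proof (cases n)
  case 0
  have "Dminus lam (gegenbauer lam n) x = 0" "Dplus lam (gegenbauer lam n) x = 0"
    using DM[OF assms, of n] DP[OF assms, of n] 0 by simp_all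
  thus ?thesis unfolding calDplus_def calDminus_def using 0 by simp
next
  case (Suc m)
  define al where "al = (real m+1+2*lam)/(real m+1+lam)"
  define be where "be = (real m+1)/(real m+1+lam)"
  define C0 where "C0 = gegenbauer (lam+1/2) m x"
  define C1 where "C1 = gegenbauer (lam+1/2) (m+1) x"
  have dm: "Dminus lam (gegenbauer lam n) x = KK lam * (al * C0 - be * C1)"
    unfolding DM[OF assms] Suc Suc_eq_plus1 core_sum[OF assms(1)] Pj_minus[OF assms(1)]
    by (simp add: al_def be_def C0_def C1_def)
  define S where "S = (\<Sum>k\<le>m+1. real k * cc lam (m+1) k * Beta (1/2) (lam + k + 1/2) * ((1+x)/2)^k)"
  have h: "-S = KK lam * (al * ((-1)^m * C0) - be * ((-1)^(m+1) * C1))"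
    unfolding S_def core_sum[OF assms(1)] Pj_plus[OF assms(1)] al_def be_def C0_def C1_def by (rule refl)
  have DPe: "Dplus lam (gegenbauer lam n) x = (-1)^(m+1) * S"
    unfolding DP[OF assms] S_def Suc Suc_eq_plus1 by (rule refl)
  have e1: "(-1::real)^(m+1) * (-1)^m = -1" by (simp add: power_add[symmetric] flip: power_mult_distrib)
  have e2: "(-1::real)^(m+1) * (-1)^(m+1) = 1" by (simp flip: power_add)
  have "(-1)^(m+1) * S = -((-1)^(m+1) * (-S))" by simp
  also have "\<dots> = -((-1)^(m+1) * (KK lam * (al * ((-1)^m * C0) - be * ((-1)^(m+1) * C1))))" unfolding h ..
  also have "\<dots> = KK lam * (al * C0 * (-((-1)^(m+1) * (-1)^m)) + be * C1 * ((-1)^(m+1) * (-1)^(m+1)))"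
    by (simp add: algebra_simps)
  also have "\<dots> = KK lam * (al * C0 + be * C1)" unfolding e1 e2 by simp
  finally have dp: "Dplus lam (gegenbauer lam n) x = KK lam * (al * C0 + be * C1)" unfolding DPe .
  have r1: "real n = real m + 1" using Suc by simp
  have A: "real n + 2*lam = real m + 1 + 2*lam" "real n + lam = real m+1+lam" "2 * real n = 2*(real m + 1)" using r1 by simp_all
  have c1: "calDplus lam (gegenbauer lam n) x = KK lam * (2 * al) * C0"
    unfolding calDplus_def dm dp by (simp add: algebra_simps)
  have c2: "calDminus lam (gegenbauer lam n) x = KK lam * (2 * be) * C1"
    unfolding calDminus_def dm dp by (simp add: algebra_simps)
  have t1: "KK lam * (2 * al) = sqrt pi * Gamma (lam + 1/2) / Gamma lam * (2 * (real n + 2 * lam) / (real n + lam))"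
    unfolding KK_def al_def A by simp
  have t2: "KK lam * (2 * be) = sqrt pi * Gamma (lam + 1/2) / Gamma lam * (2 * real n / (real n + lam))"
    unfolding KK_def be_def A by simp
  show ?thesis unfolding c1 c2 t1 t2 using Suc by (simp add: C0_def C1_def)
qed


end
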